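(* Let $\mathbf D:\mathbb{R}^{d\times N}\to\mathbb{R}^{d\times N}$ be a $C^1$ map with $\mathbf D(\mathbf T)\cdot\mathbf T\ge C_1|\mathbf T|-C_0$ for all $\mathbf T$ (some $C_0\ge0$, $C_1>0$), and such that $\mathcal A_{i\nu j\mu}(\mathbf T)=\partial\mathbf D_{i\nu}(\mathbf T)/\partial\mathbf T_{j\mu}$ satisfies $h(|\mathbf T|)|\mathbf B|^2\le\sum_{i,j,\nu,\mu}\mathcal A_{i\nu j\mu}(\mathbf T)\mathbf B_{i\nu}\mathbf B_{j\mu}\le C_2|\mathbf B|^2/(1+|\mathbf T|)$ for all $\mathbf T,\mathbf B$, for some $C_2>0$ and a positive nonincreasing continuous $h:\mathbb{R}_+\to\mathbb{R}_+$. Then for all $\mathbf T_1,\mathbf T_2\in\mathbb{R}^{d\times N}$, $$(\mathbf D(\mathbf T_1)-\mathbf D(\mathbf T_2))\cdot(\mathbf T_1-\mathbf T_2)\ge h(|\mathbf T_1|+|\mathbf T_2|)\,|\mathbf T_1-\mathbf T_2|^2,$$ and the set $\overline{\mathbf D(\mathbb{R}^{d\times N})}$ is convex. If in addition $\mathcal A$ is symmetric ($\mathcal A_{i\nu j\mu}=\mathcal A_{j\mu i\nu}$), then $F(\mathbf T)=\int_0^1\mathbf D(t\mathbf T)\cdot\mathbf T\,dt$ satisfies $\partial F(\mathbf T)/\partial\mathbf T_{i\nu}=\mathbf D_{i\nu}(\mathbf T)$ and is strictly convex; furthermore $F^*(\mathbf B)=\sup_{\mathbf T}\{\mathbf B\cdot\mathbf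 T-F(\mathbf T)\}$ is strictly convex on $\mathbf D(\mathbb{R}^{d\times N})$, satisfies $F^*(\mathbf B)=\infty$ if $\mathbf B\notin\overline{\mathbf D(\mathbb{R}^{d\times N})}$ and $F^*(\mathbf B)=\mathbf B\cdot\mathbf D^{-1}(\mathbf B)-F(\mathbf D^{-1}(\mathbf B))$ if $\mathbf B\in\mathbf D(\mathbb{R}^{d\times N})$, and $\partial F^*(\mathbf B)/\partial\mathbf B=\mathbf D^{-1}(\mathbf B)$ for $\mathbf B\in\mathbf D(\mathbb{R}^{d\times N})$.
   Context: $\mathbf A\cdot\mathbf B=\sum_{i,\nu}\mathbf A_{i\nu}\mathbf B_{i\nu}$ and $|\cdot|$ is the Euclidean norm on $\mathbb{R}^{d\times N}$. $\mathbf D^{-1}$ denotes the inverse of $\mathbf D$ on its range $\mathbf D(\mathbb{R}^{d\times N})$. *)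

theory Defs
  imports "HOL-Analysis.Analysis"
begin

text \<open>Matrices in R^(d x N) are modelled as real^'N^'d; entry (i,nu) is T$i$nu.
  The inner product of vec types is the Frobenius product A . B = sum A_(i nu) B_(i nu),
  and norm is the Euclidean (Frobenius) norm.\<close>

definition ematrix :: "'d::finite \<Rightarrow> 'N::finite \<Rightarrow> real^'N^'d" where
  "ematrix j \<mu> = axis j (axis \<mu> 1)"

definition pdA :: "(real^'N^'d \<Rightarrow> real^'N^'d) \<Rightarrow> 'd::finite \<Rightarrow> 'N::finite \<Rightarrow> 'd \<Rightarrow> 'N \<Rightarrow> real^'N^'d \<Rightarrow> real" where
  "pdA D i \<nu> j \<mu> T = (frechet_derivative D (at T) (ematrix j \<mu>)) $ i $ \<nu>"

definition C1_map :: "('a::euclidean_space \<Rightarrow> 'b::euclidean_space) \<Rightarrow> bool" where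
  "C1_map f \<longleftrightarrow> (\<exists>f'. (\<forall>x. (f has_derivative blinfun_apply (f' x)) (at x)) \<and> continuous_on UNIV f')"

definition potF :: "(real^'N^'d \<Rightarrow> real^'N^'d) \<Rightarrow> real^'N::finite^'d::finite \<Rightarrow> real" where
  "potF D T = integral {0..1} (\<lambda>t. D (t *\<^sub>R T) \<bullet> T)"

definition conjF :: "(real^'N^'d \<Rightarrow> real) \<Rightarrow> real^'N::finite^'d::finite \<Rightarrow> ereal" where
  "conjF F B = (SUP T. ereal (B \<bullet> T - F T))"

definition strictly_convex_on :: "'a::real_vector set \<Rightarrow> ('a \<Rightarrow> real) \<Rightarrow> bool" where
  "strictly_convex_on S f \<longleftrightarrow> convex S \<and>
    (\<forall>x\<in>S. \<forall>y\<in>S. x \<noteq> y \<longrightarrow> (\<forall>u::real. 0 < u \<and> u < 1 \<longrightarrow>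
       f (u *\<^sub>R x + (1 - u) *\<^sub>R y) < u * f x + (1 - u) * f y))"

text \<open>Strict convexity of an extended-real valued function on a set S (S need not be convex).\<close>
definition strictly_convex_on_ereal :: "'a::real_vector set \<Rightarrow> ('a \<Rightarrow> ereal) \<Rightarrow> bool" where
  "strictly_convex_on_ereal S f \<longleftrightarrow>
    (\<forall>x\<in>S. \<forall>y\<in>S. x \<noteq> y \<longrightarrow> (\<forall>u::real. 0 < u \<and> u < 1 \<longrightarrow>
       f (u *\<^sub>R x + (1 - u) *\<^sub>R y) < ereal u * f x + ereal (1 - u) * f y))"

end

theory Submission
  imports Defs
begin


lemma mat_expand:
  fixes X :: "real^'N::finite^'d::finite"
  shows "X = (\<Sum>j\<in>UNIV. \<Sum>\<mu>\<in>UNIV. X$j$\<mu> *\<^sub>R ematrix j \<mu>)"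
proof -
  have e: "(ematrix j \<mu>)$i$\<nu> = (if j = i then (if \<mu> = \<nu> then 1 else 0) else 0)" for j \<mu> i \<nu>
    by (simp add: ematrix_def axis_def)
  have s: "(\<Sum>x\<in>UNIV. \<Sum>xa\<in>UNIV. if x = i then if xa = ia then X $ i $ ia else 0 else 0) = X$i$ia"
    for i ia
  proof -
    have "(\<Sum>x\<in>UNIV. \<Sum>xa\<in>UNIV. if x = i then if xa = ia then X $ i $ ia else 0 else 0)
       = (\<Sum>x\<in>UNIV. if x = i then (\<Sum>xa\<in>UNIV. if xa = ia then X $ i $ ia else 0) else 0)"
      by (intro sum.cong) auto
    then show ?thesis by simp
  qed
  show ?thesis
    by (simp add: vec_eq_iff e if_distrib[where f="\<lambda>x. _ * x"] s cong: if_cong)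
qed

lemma lin_expand:
  fixes X :: "real^'N::finite^'d::finite" and L :: "real^'N^'d \<Rightarrow> real^'N^'d"
  assumes "linear L"
  shows "L X $ i $ \<nu> = (\<Sum>j\<in>UNIV. \<Sum>\<mu>\<in>UNIV. X$j$\<mu> * L (ematrix j \<mu>) $ i $ \<nu>)"
proof -
  have "L X = (\<Sum>j\<in>UNIV. \<Sum>\<mu>\<in>UNIV. X$j$\<mu> *\<^sub>R L (ematrix j \<mu>))"
    by (subst mat_expand) (simp add: linear_sum[OF assms] linear_scale[OF assms])
  then show ?thesis by simp
qed

lemma quad_eq:
  fixes B :: "real^'N::finite^'d::finite" and L :: "real^'N^'d \<Rightarrow> real^'N^'d"
  assumes "linear L"
  shows "(\<Sum>i\<in>UNIV. \<Sum>\<nu>\<in>UNIV. \<Sum>j\<in>UNIV. \<Sum>\<mu>\<in>UNIV. L (ematrix j \<mu>) $ i $ \<nu> * B $ i $ \<nu> * B $ j $ \<mu>)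
     = B \<bullet> L B"
proof -
  have "B \<bullet> L B = (\<Sum>i\<in>UNIV. \<Sum>\<nu>\<in>UNIV. B $ i $ \<nu> * L B $ i $ \<nu>)"
    unfolding inner_vec_def inner_real_def by (rule refl)
  also have "\<dots> = (\<Sum>i\<in>UNIV. \<Sum>\<nu>\<in>UNIV. B $ i $ \<nu> * (\<Sum>j\<in>UNIV. \<Sum>\<mu>\<in>UNIV. B$j$\<mu> * L (ematrix j \<mu>) $ i $ \<nu>))"
    by (simp only: lin_expand[OF assms, of B])
  also have "\<dots> = (\<Sum>i\<in>UNIV. \<Sum>\<nu>\<in>UNIV. \<Sum>j\<in>UNIV. \<Sum>\<mu>\<in>UNIV. L (ematrix j \<mu>) $ i $ \<nu> * B $ i $ \<nu> * B $ j $ \<mu>)"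
    unfolding sum_distrib_left by (intro sum.cong refl) (simp only: mult_ac)
  finally show ?thesis by (rule sym)
qed



locale mono_setup =
  fixes D :: "real^'N::finite^'d::finite \<Rightarrow> real^'N^'d"
    and D' :: "real^'N^'d \<Rightarrow> ((real^'N^'d) \<Rightarrow>\<^sub>L (real^'N^'d))"
    and h :: "real \<Rightarrow> real"
  assumes der: "\<And>x. (D has_derivative blinfun_apply (D' x)) (at x)"
    and contD': "continuous_on UNIV D'"
    and hpos: "\<And>t. t \<ge> 0 \<Longrightarrow> h t > 0"
    and hmono: "\<And>s t. 0 \<le> s \<Longrightarrow> s \<le> t \<Longrightarrow> h t \<le> h s"
    and ell: "\<And>T B. h (norm T) * (norm B)\<^sup>2 \<le> B \<bullet> D' T B"
begin

lemma contD: "continuous_on UNIV D"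
  using der by (meson differentiable_def differentiable_imp_continuous_on differentiable_on_def)

lemma line_deriv:
  "((\<lambda>t. D (X + t *\<^sub>R V) \<bullet> W) has_real_derivative (D' (X + t *\<^sub>R V) V \<bullet> W)) (at t within S)"
proof -
  have "((\<lambda>t. X + t *\<^sub>R V) has_derivative (\<lambda>s. s *\<^sub>R V)) (at t within S)"
    by (auto intro!: derivative_eq_intros)
  from has_derivative_compose[OF this der]
  have "((\<lambda>t. D (X + t *\<^sub>R V)) has_derivative (\<lambda>s. D' (X + t *\<^sub>R V) (s *\<^sub>R V))) (at t within S)" .
  then have "((\<lambda>t. D (X + t *\<^sub>R V) \<bullet> W) has_derivative (\<lambda>s. D' (X + t *\<^sub>R V) (s *\<^sub>R V) \<bullet> W)) (at t within S)"
    by (auto intro!: derivative_eq_intros)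
  moreover have "(\<lambda>s. D' (X + t *\<^sub>R V) (s *\<^sub>R V) \<bullet> W) = (*) (D' (X + t *\<^sub>R V) V \<bullet> W)"
    by (auto simp: blinfun.scaleR_right)
  ultimately show ?thesis
    by (simp add: has_field_derivative_def)
qed

lemma strong_mono:
  "(D T1 - D T2) \<bullet> (T1 - T2) \<ge> h (norm T1 + norm T2) * (norm (T1 - T2))\<^sup>2"
proof -
  define V where "V = T1 - T2"
  obtain z where z: "0 < z" "z < 1"
    and eq: "D (T2 + 1 *\<^sub>R V) \<bullet> V - D (T2 + 0 *\<^sub>R V) \<bullet> V = (1 - 0) * (D' (T2 + z *\<^sub>R V) V \<bullet> V)"
    using MVT2[of 0 1 "\<lambda>t. D (T2 + t *\<^sub>R V) \<bullet> V" "\<lambda>t. D' (T2 + t *\<^sub>R V) V \<bullet> V"] line_deriv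
    by fastforce
  have "norm (T2 + z *\<^sub>R V) = norm (z *\<^sub>R T1 + (1 - z) *\<^sub>R T2)"
    by (simp add: V_def algebra_simps)
  also have "\<dots> \<le> z * norm T1 + (1 - z) * norm T2"
    using z norm_triangle_ineq[of "z *\<^sub>R T1" "(1 - z) *\<^sub>R T2"] by simp
  also have "\<dots> \<le> norm T1 + norm T2"
    using z mult_left_le_one_le[of "norm T1" z] mult_left_le_one_le[of "norm T2" "1 - z"] by simp
  finally have "h (norm T1 + norm T2) \<le> h (norm (T2 + z *\<^sub>R V))"
    by (intro hmono) auto
  then have "h (norm T1 + norm T2) * (norm V)\<^sup>2 \<le> h (norm (T2 + z *\<^sub>R V)) * (norm V)\<^sup>2"
    by (intro mult_right_mono) auto
  also have "\<dots> \<le> D' (T2 + z *\<^sub>R V) V \<bullet> V" using ell by (simp add: inner_commute)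
  finally show ?thesis using eq by (simp add: V_def inner_diff_left)
qed

lemma strict_mono: "T1 \<noteq> T2 \<Longrightarrow> (D T1 - D T2) \<bullet> (T1 - T2) > 0"
proof -
  assume "T1 \<noteq> T2"
  then have "h (norm T1 + norm T2) * (norm (T1 - T2))\<^sup>2 > 0"
    using hpos by auto
  then show ?thesis using strong_mono[of T1 T2] by linarith
qed

lemma D_inj: "inj D"
proof (rule injI)
  fix x y assume "D x = D y"
  then show "x = y" using strict_mono[of x y] by (metis diff_self inner_zero_left less_irrefl)
qed

lemma open_range: "open (range D)"
  by (rule invariance_of_domain[OF contD open_UNIV]) (use D_inj in \<open>auto simp: inj_on_def inj_def\<close>)

end


context mono_setup begin

lemma mono0: "(D T1 - D T2) \<bullet> (T1 - T2) \<ge> 0"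
  using strict_mono[of T1 T2] by (cases "T1 = T2") auto

lemma pert_surj:
  assumes e: "e > 0"
  shows "\<exists>T. D T + e *\<^sub>R T = B"
proof -
  define E where "E = (\<lambda>T. D T + e *\<^sub>R T)"
  have lb: "e * norm (T1 - T2) \<le> norm (E T1 - E T2)" for T1 T2
  proof -
    have "(E T1 - E T2) \<bullet> (T1 - T2) = (D T1 - D T2) \<bullet> (T1 - T2) + e * (norm (T1 - T2))\<^sup>2"
      by (simp add: E_def algebra_simps inner_diff_left inner_add_left power2_norm_eq_inner)
    then have "e * (norm (T1 - T2))\<^sup>2 \<le> norm (E T1 - E T2) * norm (T1 - T2)"
      using mono0[of T1 T2] norm_cauchy_schwarz[of "E T1 - E T2" "T1 - T2"] by linarith
    then have *: "(e * norm (T1 - T2)) * norm (T1 - T2) \<le> norm (E T1 - E T2) * norm (T1 - T2)"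
      by (simp add: power2_eq_square mult.assoc)
    show ?thesis
    proof (cases "T1 = T2")
      case False
      then show ?thesis using mult_right_le_imp_le[OF *] by simp
    qed simp
  qed
  have cE: "continuous_on UNIV E"
    unfolding E_def by (intro continuous_intros contD)
  have injE: "inj_on E UNIV"
  proof (rule inj_onI)
    fix x y assume "E x = E y"
    then have "e * norm (x - y) \<le> 0" using lb[of x y] by simp
    then have "norm (x - y) \<le> 0" using e by (simp add: mult_le_0_iff)
    then show "x = y" by simp
  qed
  have op: "open (range E)"
    by (rule invariance_of_domain[OF cE open_UNIV injE])
  have cl: "closed (range E)"
    unfolding closed_sequential_limits
  proof clarify
    fix x l assume xs: "\<forall>n. x n \<in> range E" and lim: "x \<longlonglongrightarrow> l"
    have "\<forall>n. \<exists>t. x n = E t" using xs by auto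
    then obtain T where T: "\<And>n. x n = E (T n)" by metis
    have "Cauchy x" using lim by (rule LIMSEQ_imp_Cauchy)
    have "Cauchy T"
    proof (rule CauchyI)
      fix r :: real assume "r > 0"
      then obtain M where M: "\<forall>m\<ge>M. \<forall>n\<ge>M. norm (x m - x n) < e * r"
        using \<open>Cauchy x\<close> e unfolding Cauchy_iff by (meson mult_pos_pos)
      show "\<exists>M. \<forall>m\<ge>M. \<forall>n\<ge>M. norm (T m - T n) < r"
      proof (intro exI allI impI)
        fix m n assume "m \<ge> M" "n \<ge> M"
        then have "e * norm (T m - T n) < e * r" using M lb[of "T m" "T n"] T by fastforce
        then show "norm (T m - T n) < r" using e by simp
      qed
    qed
    then obtain L where L: "T \<longlonglongrightarrow> L" using Cauchy_convergent_iff convergent_def by blast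
    have "(\<lambda>n. E (T n)) \<longlonglongrightarrow> E L"
      using cE L by (intro continuous_on_tendsto_compose[of UNIV E]) auto
    moreover have "x = (\<lambda>n. E (T n))" using T by auto
    ultimately have "l = E L" using lim LIMSEQ_unique by metis
    then show "l \<in> range E" by simp
  qed
  have "range E = UNIV" using clopen[of "range E"] op cl by auto
  then obtain T where "B = E T" by (metis UNIV_I imageE)
  then show ?thesis unfolding E_def by auto
qed

end


context mono_setup begin

lemma seg_in_closure:
  assumes u: "0 \<le> u" "u \<le> 1"
  shows "u *\<^sub>R D T1 + (1 - u) *\<^sub>R D T2 \<in> closure (range D)"
  unfolding closure_approachable
proof (intro allI impI)
  fix \<eta> :: real assume "\<eta> > 0"
  define n where "n = min \<eta> 1"
  have n: "0 < n" "n \<le> 1" "n \<le> \<eta>" using \<open>\<eta> > 0\<close> by (auto simp: n_def)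
  define B where "B = u *\<^sub>R D T1 + (1 - u) *\<^sub>R D T2"
  define K where "K = - (u *\<^sub>R (B - D T1) \<bullet> T1) - ((1 - u) *\<^sub>R (B - D T2) \<bullet> T2)"
  define Tb where "Tb = u *\<^sub>R T1 + (1 - u) *\<^sub>R T2"
  define M where "M = \<bar>K\<bar> + norm Tb + 1"
  have M: "M > 0" "\<bar>K\<bar> \<le> M" "norm Tb \<le> M"
    unfolding M_def using abs_ge_zero[of K] norm_ge_zero[of Tb] by linarith+
  define e where "e = n\<^sup>2 / (4 * M)"
  have e: "e > 0" using n M by (auto simp: e_def)
  obtain T where T: "D T + e *\<^sub>R T = B" using pert_surj[OF e] by blast
  have DT: "D T = B - e *\<^sub>R T" using T by (simp add: algebra_simps)
  have m1: "(B - e *\<^sub>R T - D T1) \<bullet> (T - T1) \<ge> 0" using mono0[of T T1] DT by simp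
  have m2: "(B - e *\<^sub>R T - D T2) \<bullet> (T - T2) \<ge> 0" using mono0[of T T2] DT by simp
  have "u * ((B - e *\<^sub>R T - D T1) \<bullet> (T - T1)) + (1 - u) * ((B - e *\<^sub>R T - D T2) \<bullet> (T - T2)) \<ge> 0"
    using m1 m2 u by (simp add: add_nonneg_nonneg)
  moreover have "u * ((B - e *\<^sub>R T - D T1) \<bullet> (T - T1)) + (1 - u) * ((B - e *\<^sub>R T - D T2) \<bullet> (T - T2))
     = K - e * ((norm T)\<^sup>2 - T \<bullet> Tb)"
    unfolding K_def Tb_def B_def
    by (simp add: algebra_simps inner_diff_left inner_diff_right inner_add_left inner_add_right power2_norm_eq_inner)
  ultimately have key: "e * (norm T)\<^sup>2 \<le> K + e * (T \<bullet> Tb)" by (simp add: algebra_simps)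
  define a where "a = e * norm T"
  have a0: "a \<ge> 0" using e by (simp add: a_def)
  have "e * (T \<bullet> Tb) \<le> e * (norm T * M)"
    using e M norm_cauchy_schwarz[of T Tb] mult_left_mono[of "norm Tb" M "norm T"]
    by (intro mult_left_mono) auto
  with key M have "e * (norm T)\<^sup>2 \<le> M + e * norm T * M" by (simp add: mult.assoc)
  then have "e * (e * (norm T)\<^sup>2) \<le> e * (M + e * norm T * M)" using e by simp
  then have aq: "a\<^sup>2 \<le> e * M * (1 + a)" by (simp add: a_def power2_eq_square algebra_simps)
  have "a < n"
  proof (rule ccontr)
    assume "\<not> a < n"
    then have an: "n \<le> a" by simp
    have eM: "e * M = n\<^sup>2 / 4" using M by (simp add: e_def)
    have n2: "n\<^sup>2 > 0" using n by simp
    show False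
    proof (cases "a \<le> 1")
      case True
      have "n\<^sup>2 / 4 * (1 + a) \<le> n\<^sup>2 / 4 * 2" using True n2 by (intro mult_left_mono) auto
      moreover have "a\<^sup>2 \<le> n\<^sup>2 / 4 * (1 + a)" using aq by (simp only: eM)
      ultimately have "a\<^sup>2 \<le> n\<^sup>2 / 2" by linarith
      moreover have "n\<^sup>2 \<le> a\<^sup>2" using an n by (intro power_mono) auto
      ultimately show False using n2 by simp
    next
      case False
      have "n\<^sup>2 / 4 * (1 + a) \<le> n\<^sup>2 / 4 * (2 * a)" using False n2 by (intro mult_left_mono) auto
      moreover have "a\<^sup>2 \<le> n\<^sup>2 / 4 * (1 + a)" using aq by (simp only: eM)
      ultimately have "a * a \<le> a * (n\<^sup>2 / 2)" by (simp add: power2_eq_square)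
      then have "a \<le> n\<^sup>2 / 2" using False by simp
      moreover have "n\<^sup>2 \<le> 1" using n by (simp add: power_le_one)
      ultimately show False using False by simp
    qed
  qed
  have "dist (D T) B = a" using e by (simp add: DT dist_norm a_def)
  then show "\<exists>y\<in>range D. dist y (u *\<^sub>R D T1 + (1 - u) *\<^sub>R D T2) < \<eta>"
    using \<open>a < n\<close> n B_def by (metis rangeI order_less_le_trans)
qed

end


context mono_setup begin

lemma convex_closure_range: "convex (closure (range D))"
  unfolding convex_def
proof (intro ballI allI impI)
  fix x y :: "real^'N^'d" and u v :: real
  assume x: "x \<in> closure (range D)" and y: "y \<in> closure (range D)"
    and uv: "0 \<le> u" "0 \<le> v" "u + v = 1"
  obtain xs where xs: "\<And>n. xs n \<in> range D" "xs \<longlonglongrightarrow> x" using x unfolding closure_sequential by blast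
  obtain ys where ys: "\<And>n. ys n \<in> range D" "ys \<longlonglongrightarrow> y" using y unfolding closure_sequential by blast
  have inn: "u *\<^sub>R xs n + v *\<^sub>R ys n \<in> closure (range D)" for n
  proof -
    obtain a b where ab: "xs n = D a" "ys n = D b" using xs(1) ys(1) by blast
    have "v = 1 - u" using uv by simp
    then have "u *\<^sub>R xs n + v *\<^sub>R ys n = u *\<^sub>R D a + (1 - u) *\<^sub>R D b" using ab by simp
    then show ?thesis using seg_in_closure[of u a b] uv by simp
  qed
  have lim: "(\<lambda>n. u *\<^sub>R xs n + v *\<^sub>R ys n) \<longlonglongrightarrow> u *\<^sub>R x + v *\<^sub>R y"
    using xs(2) ys(2) by (intro tendsto_intros)
  have "closed (closure (range D))" by simp
  then have "\<forall>x l. (\<forall>n. x n \<in> closure (range D)) \<and> x \<longlonglongrightarrow> l \<longrightarrow> l \<in> closure (range D)"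
    by (simp only: closed_sequential_limits)
  note sp = spec[OF spec[OF this, of "\<lambda>n. u *\<^sub>R xs n + v *\<^sub>R ys n"], of "u *\<^sub>R x + v *\<^sub>R y"]
  show "u *\<^sub>R x + v *\<^sub>R y \<in> closure (range D)"
    by (rule mp[OF sp]) (use inn lim in blast)
qed

end


locale sym_setup = mono_setup +
  assumes sym: "\<And>T X Y. D' T X \<bullet> Y = D' T Y \<bullet> X"
begin

definition fx where
  "fx x t = t *\<^sub>R (blinfun_inner_left x o\<^sub>L D' (t *\<^sub>R x)) + blinfun_inner_left (D (t *\<^sub>R x))"

lemma fx_apply: "blinfun_apply (fx x t) H = t * (D' (t *\<^sub>R x) H \<bullet> x) + D (t *\<^sub>R x) \<bullet> H"
  by (simp add: fx_def blinfun.add_left blinfun.scaleR_left inner_commute)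

lemma pot_deriv: "(potF D has_derivative (\<lambda>H. D T \<bullet> H)) (at T)"
proof -
  have fxd: "((\<lambda>x. D (t *\<^sub>R x) \<bullet> x) has_derivative blinfun_apply (fx x t)) (at x within UNIV)" for x t
  proof -
    have "((\<lambda>x. t *\<^sub>R x) has_derivative (\<lambda>H. t *\<^sub>R H)) (at x)"
      by (auto intro!: derivative_eq_intros)
    from has_derivative_compose[OF this der]
    have "((\<lambda>x. D (t *\<^sub>R x)) has_derivative (\<lambda>H. D' (t *\<^sub>R x) (t *\<^sub>R H))) (at x)" .
    then have "((\<lambda>x. D (t *\<^sub>R x) \<bullet> x) has_derivative
        (\<lambda>H. D (t *\<^sub>R x) \<bullet> H + D' (t *\<^sub>R x) (t *\<^sub>R H) \<bullet> x)) (at x)"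
      by (auto intro!: derivative_eq_intros)
    moreover have "(\<lambda>H. D (t *\<^sub>R x) \<bullet> H + D' (t *\<^sub>R x) (t *\<^sub>R H) \<bullet> x) = blinfun_apply (fx x t)"
      by (auto simp: fx_apply blinfun.scaleR_right)
    ultimately show ?thesis by simp
  qed
  have cfx: "continuous_on (UNIV \<times> cbox 0 1) (\<lambda>(x, t). fx x t)"
    unfolding fx_def split_beta
    by (intro continuous_intros continuous_on_compose2[OF contD' _ subset_UNIV]
          continuous_on_compose2[OF contD _ subset_UNIV])
  have int: "(\<lambda>t. D (t *\<^sub>R x) \<bullet> x) integrable_on cbox 0 1" for x
    by (intro integrable_continuous continuous_intros continuous_on_compose2[OF contD _ subset_UNIV])
  have L: "((\<lambda>x. integral (cbox 0 1) (\<lambda>t. D (t *\<^sub>R x) \<bullet> x)) has_derivative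
      blinfun_apply (integral (cbox 0 (1::real)) (fx T))) (at T within UNIV)"
    by (rule leibniz_rule[OF fxd int cfx UNIV_I convex_UNIV])
  have intfx: "fx T integrable_on cbox 0 1"
    unfolding fx_def
    by (intro integrable_continuous continuous_intros continuous_on_compose2[OF contD' _ subset_UNIV]
          continuous_on_compose2[OF contD _ subset_UNIV])
  have val: "blinfun_apply (integral (cbox 0 (1::real)) (fx T)) H = D T \<bullet> H" for H
  proof -
    have "((\<lambda>t. t * (D (t *\<^sub>R T) \<bullet> H)) has_real_derivative
        (D (t *\<^sub>R T) \<bullet> H + t * (D' (t *\<^sub>R T) T \<bullet> H))) (at t within {0..1})" for t
    proof -
      have "((\<lambda>t. D (0 + t *\<^sub>R T) \<bullet> H) has_real_derivative (D' (0 + t *\<^sub>R T) T \<bullet> H)) (at t within {0..1})"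
        by (rule line_deriv)
      then have "((\<lambda>t. D (t *\<^sub>R T) \<bullet> H) has_real_derivative (D' (t *\<^sub>R T) T \<bullet> H)) (at t within {0..1})"
        by simp
      then show ?thesis by (auto intro!: derivative_eq_intros)
    qed
    then have "((\<lambda>t. D (t *\<^sub>R T) \<bullet> H + t * (D' (t *\<^sub>R T) T \<bullet> H)) has_integral
        (1 * (D (1 *\<^sub>R T) \<bullet> H) - 0 * (D (0 *\<^sub>R T) \<bullet> H))) {0..1}"
      by (intro fundamental_theorem_of_calculus) (auto simp: has_real_derivative_iff_has_vector_derivative[symmetric])
    then have "((\<lambda>t. blinfun_apply (fx T t) H) has_integral D T \<bullet> H) {0..1}"
      by (simp add: fx_apply sym add.commute)
    then show ?thesis
      using blinfun_apply_integral[OF intfx] by (simp add: integral_unique)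
  qed
  have "potF D = (\<lambda>x. integral (cbox 0 1) (\<lambda>t. D (t *\<^sub>R x) \<bullet> x))"
    by (auto simp: potF_def fun_eq_iff)
  moreover have "blinfun_apply (integral (cbox 0 (1::real)) (fx T)) = (\<lambda>H. D T \<bullet> H)"
    using val by auto
  ultimately show ?thesis using L by simp
qed

end


context sym_setup begin

abbreviation "F \<equiv> potF D"

lemma F_line_deriv:
  "((\<lambda>s. F (X + s *\<^sub>R V)) has_real_derivative (D (X + s *\<^sub>R V) \<bullet> V)) (at s within S)"
proof -
  have "((\<lambda>s. X + s *\<^sub>R V) has_derivative (\<lambda>r. r *\<^sub>R V)) (at s within S)"
    by (auto intro!: derivative_eq_intros)
  from has_derivative_compose[OF this pot_deriv]
  have "((\<lambda>s. F (X + s *\<^sub>R V)) has_derivative (\<lambda>r. D (X + s *\<^sub>R V) \<bullet> (r *\<^sub>R V))) (at s within S)" .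
  moreover have "(\<lambda>r. D (X + s *\<^sub>R V) \<bullet> (r *\<^sub>R V)) = (*) (D (X + s *\<^sub>R V) \<bullet> V)"
    by (auto simp: mult.commute)
  ultimately show ?thesis by (simp add: has_field_derivative_def)
qed

lemma grad_strict:
  assumes "Y \<noteq> X"
  shows "F Y > F X + D X \<bullet> (Y - X)"
proof -
  define V where "V = Y - X"
  obtain z where z: "0 < z" "z < 1"
    and eq: "F (X + 1 *\<^sub>R V) - F (X + 0 *\<^sub>R V) = (1 - 0) * (D (X + z *\<^sub>R V) \<bullet> V)"
    using MVT2[of 0 1 "\<lambda>s. F (X + s *\<^sub>R V)" "\<lambda>s. D (X + s *\<^sub>R V) \<bullet> V"] F_line_deriv
    by fastforce
  have "X + z *\<^sub>R V \<noteq> X" using z assms by (simp add: V_def)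
  then have "(D (X + z *\<^sub>R V) - D X) \<bullet> ((X + z *\<^sub>R V) - X) > 0" by (rule strict_mono)
  then have "z * ((D (X + z *\<^sub>R V) - D X) \<bullet> V) > 0" by simp
  then have "(D (X + z *\<^sub>R V) - D X) \<bullet> V > 0" using z by (simp add: zero_less_mult_iff)
  then show ?thesis using eq by (simp add: V_def inner_diff_left)
qed

lemma grad_le: "F Y \<ge> F X + D X \<bullet> (Y - X)"
  using grad_strict[where Y=Y and X=X] by (cases "Y = X") auto

lemma F_strict_convex: "strictly_convex_on UNIV F"
  unfolding strictly_convex_on_def
proof (intro conjI convex_UNIV ballI impI allI)
  fix x y :: "real^'a^'b" and u :: real
  assume "x \<noteq> y" and u: "0 < u \<and> u < 1"
  define z where "z = u *\<^sub>R x + (1 - u) *\<^sub>R y"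
  have xz: "x - z = (1 - u) *\<^sub>R (x - y)" by (simp add: z_def algebra_simps)
  have yz: "y - z = (- u) *\<^sub>R (x - y)" by (simp add: z_def algebra_simps)
  have "x \<noteq> z" using xz u \<open>x \<noteq> y\<close> by auto
  have "y \<noteq> z" using yz u \<open>x \<noteq> y\<close> by auto
  have 1: "F x > F z + D z \<bullet> (x - z)" using grad_strict \<open>x \<noteq> z\<close> by blast
  have 2: "F y > F z + D z \<bullet> (y - z)" using grad_strict \<open>y \<noteq> z\<close> by blast
  have "u * F x + (1 - u) * F y > u * (F z + D z \<bullet> (x - z)) + (1 - u) * (F z + D z \<bullet> (y - z))"
    using 1 2 u by (intro add_strict_mono mult_strict_left_mono) auto
  also have "u * (F z + D z \<bullet> (x - z)) + (1 - u) * (F z + D z \<bullet> (y - z)) = F z"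
    unfolding xz yz by (simp add: algebra_simps)
  finally show "F (u *\<^sub>R x + (1 - u) *\<^sub>R y) < u * F x + (1 - u) * F y" by (simp add: z_def)
qed

lemma conj_val: "conjF F (D T0) = ereal (D T0 \<bullet> T0 - F T0)"
  unfolding conjF_def
proof (rule antisym)
  show "(SUP T. ereal (D T0 \<bullet> T - F T)) \<le> ereal (D T0 \<bullet> T0 - F T0)"
  proof (rule SUP_least)
    fix T show "ereal (D T0 \<bullet> T - F T) \<le> ereal (D T0 \<bullet> T0 - F T0)"
      using grad_le[where Y=T and X=T0] by (simp add: inner_diff_right)
  qed
  show "ereal (D T0 \<bullet> T0 - F T0) \<le> (SUP T. ereal (D T0 \<bullet> T - F T))"
    by (rule SUP_upper) auto
qed

lemma conj_strict: "T \<noteq> T0 \<Longrightarrow> D T0 \<bullet> T - F T < D T0 \<bullet> T0 - F T0"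
  using grad_strict[where Y=T and X=T0] by (simp add: inner_diff_right)

lemma conj_infty:
  assumes B: "B \<notin> closure (range D)"
  shows "conjF F B = \<infinity>"
proof -
  obtain a b where ab: "a \<bullet> B < b" "\<And>x. x \<in> closure (range D) \<Longrightarrow> b < a \<bullet> x"
    using separating_hyperplane_closed_point[OF convex_closure_range closed_closure B] by blast
  define c where "c = - a"
  define g where "g = c \<bullet> B + b"
  have g: "g > 0" using ab(1) by (simp add: g_def c_def)
  have cD: "c \<bullet> D T < - b" for T
  proof -
    have "D T \<in> closure (range D)" using closure_subset[of "range D"] by auto
    then have "b < a \<bullet> D T" by (rule ab(2))
    then show ?thesis by (simp add: c_def)
  qed
  have Fs: "F (s *\<^sub>R c) \<le> F 0 + s * (- b)" if s: "s \<ge> 0" for s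
  proof -
    have "F 0 \<ge> F (s *\<^sub>R c) + D (s *\<^sub>R c) \<bullet> (0 - s *\<^sub>R c)" by (rule grad_le)
    moreover have "D (s *\<^sub>R c) \<bullet> (0 - s *\<^sub>R c) = - s * (c \<bullet> D (s *\<^sub>R c))"
      by (simp add: inner_commute)
    moreover have "s * (c \<bullet> D (s *\<^sub>R c)) \<le> s * (- b)"
      using cD[of "s *\<^sub>R c"] s by (intro mult_left_mono) auto
    ultimately show ?thesis by linarith
  qed
  have big: "\<exists>T. r < B \<bullet> T - F T" for r
  proof -
    define s where "s = (\<bar>r\<bar> + \<bar>F 0\<bar> + 1) / g"
    have s: "s \<ge> 0" using g by (simp add: s_def)
    have sg: "s * g = \<bar>r\<bar> + \<bar>F 0\<bar> + 1" using g by (simp add: s_def)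
    have "B \<bullet> (s *\<^sub>R c) - F (s *\<^sub>R c) \<ge> s * (c \<bullet> B) - F 0 - s * (- b)"
      using Fs[OF s] by (simp add: inner_commute)
    also have "s * (c \<bullet> B) - F 0 - s * (- b) = s * g - F 0" by (simp add: g_def algebra_simps)
    finally have "B \<bullet> (s *\<^sub>R c) - F (s *\<^sub>R c) > r" using sg by linarith
    then show ?thesis by blast
  qed
  show ?thesis
    unfolding conjF_def top_ereal_def[symmetric] SUP_eq_top_iff
  proof (intro allI impI)
    fix x :: ereal assume "x < top"
    then obtain r where "x < ereal r"
      using less_ereal.simps(1) by (metis ereal_dense2)
    moreover obtain T where "r < B \<bullet> T - F T" using big by blast
    ultimately show "\<exists>T\<in>UNIV. x < ereal (B \<bullet> T - F T)"
      by (metis UNIV_I less_ereal.simps(1) order_less_trans)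
  qed
qed

end


context sym_setup begin

lemma growth:
  "F T - D X \<bullet> T \<ge> F X - D X \<bullet> X + h (2 * norm X + 1) * (norm (T - X) - 1)"
proof (cases "norm (T - X) \<le> 1")
  case True
  have "h (2 * norm X + 1) > 0" by (intro hpos) auto
  then have "h (2 * norm X + 1) * (norm (T - X) - 1) \<le> 0" using True by (simp add: mult_nonneg_nonpos)
  moreover have "F T \<ge> F X + D X \<bullet> (T - X)" by (rule grad_le)
  ultimately show ?thesis by (simp add: inner_diff_right)
next
  case False
  define r where "r = norm (T - X)"
  have r: "r > 1" using False by (simp add: r_def)
  define w where "w = (1 / r) *\<^sub>R (T - X)"
  have TX: "T \<noteq> X" using r by (auto simp: r_def)
  have nw: "norm w = 1" using r TX by (simp add: w_def r_def)
  define A where "A = X + w"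
  have rr: "1 - 1 / r = (r - 1) / r" using r by (simp add: field_simps)
  have "T - A = (T - X) - (1 / r) *\<^sub>R (T - X)" by (simp add: A_def w_def)
  also have "\<dots> = (1 - 1 / r) *\<^sub>R (T - X)" by (simp add: scaleR_diff_left)
  also have "\<dots> = (r - 1) *\<^sub>R w" by (simp add: rr w_def)
  finally have TA: "T - A = (r - 1) *\<^sub>R w" .
  have 1: "F T \<ge> F A + D A \<bullet> (T - A)" by (rule grad_le)
  have 2: "F A \<ge> F X + D X \<bullet> (A - X)" by (rule grad_le)
  have nA: "norm A + norm X \<le> 2 * norm X + 1"
    using norm_triangle_ineq[of X w] nw by (simp add: A_def)
  have "(D A - D X) \<bullet> (A - X) \<ge> h (norm A + norm X) * (norm (A - X))\<^sup>2" by (rule strong_mono)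
  moreover have "h (2 * norm X + 1) \<le> h (norm A + norm X)" using nA by (intro hmono) auto
  ultimately have 3: "(D A - D X) \<bullet> w \<ge> h (2 * norm X + 1)" using nw by (simp add: A_def)
  have "(D A - D X) \<bullet> (T - A) = (r - 1) * ((D A - D X) \<bullet> w)" by (simp add: TA)
  also have "\<dots> \<ge> (r - 1) * h (2 * norm X + 1)" using 3 r by (intro mult_left_mono) auto
  finally have 4: "(D A - D X) \<bullet> (T - A) \<ge> (r - 1) * h (2 * norm X + 1)" .
  have "F T - D X \<bullet> T \<ge> F X - D X \<bullet> X + (D A - D X) \<bullet> (T - A)"
    using 1 2 by (simp add: inner_diff_right inner_diff_left algebra_simps)
  then show ?thesis using 4 by (simp add: r_def mult.commute)
qed

lemma F_cont: "continuous_on UNIV F"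
  using pot_deriv by (meson has_derivative_continuous continuous_at_imp_continuous_on)

lemma range_convex: "convex (range D)"
  unfolding convex_def
proof (intro ballI allI impI)
  fix X Y :: "real^'a^'b" and u v :: real
  assume X: "X \<in> range D" and Y: "Y \<in> range D" and uv: "0 \<le> u" "0 \<le> v" "u + v = 1"
  obtain T1 T2 where T: "X = D T1" "Y = D T2" using X Y by blast
  define B where "B = u *\<^sub>R X + v *\<^sub>R Y"
  define G where "G = (\<lambda>T. F T - B \<bullet> T)"
  define k1 where "k1 = h (2 * norm T1 + 1)"
  define k2 where "k2 = h (2 * norm T2 + 1)"
  have k: "k1 > 0" "k2 > 0" unfolding k1_def k2_def by (intro hpos; simp)+
  define k where "k = min k1 k2"
  have kp: "k > 0" using k by (simp add: k_def)
  define c1 where "c1 = F T1 - D T1 \<bullet> T1"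
  define c2 where "c2 = F T2 - D T2 \<bullet> T2"
  define c where "c = u * c1 + v * c2"
  have Gsplit: "G T = u * (F T - D T1 \<bullet> T) + v * (F T - D T2 \<bullet> T)" for T
  proof -
    have "F T = u * F T + v * F T" using uv by (metis distrib_right mult_1)
    then show ?thesis by (simp add: G_def B_def T inner_add_left algebra_simps)
  qed
  have Glow: "G T \<ge> c + k * (norm T - norm T1 - norm T2 - 1)"
    if q: "norm T - norm T1 - norm T2 - 1 \<ge> 0" for T
  proof -
    define q where "q = norm T - norm T1 - norm T2 - 1"
    have q0: "q \<ge> 0" using q by (simp add: q_def)
    have "norm (T - T1) - 1 \<ge> q" unfolding q_def using norm_triangle_ineq2[of T T1] norm_ge_zero[of T2] by linarith
    then have a1: "k1 * (norm (T - T1) - 1) \<ge> k * q"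
      using k kp q0 by (intro mult_mono) (auto simp: k_def)
    have "norm (T - T2) - 1 \<ge> q" unfolding q_def using norm_triangle_ineq2[of T T2] norm_ge_zero[of T1] by linarith
    then have a2: "k2 * (norm (T - T2) - 1) \<ge> k * q"
      using k kp q0 by (intro mult_mono) (auto simp: k_def)
    have g1: "F T - D T1 \<bullet> T \<ge> c1 + k1 * (norm (T - T1) - 1)"
      using growth[where X=T1 and T=T] by (simp add: c1_def k1_def)
    have g2: "F T - D T2 \<bullet> T \<ge> c2 + k2 * (norm (T - T2) - 1)"
      using growth[where X=T2 and T=T] by (simp add: c2_def k2_def)
    have "G T \<ge> u * (c1 + k * q) + v * (c2 + k * q)"
      unfolding Gsplit using g1 g2 a1 a2 uv
      by (intro add_mono mult_left_mono) auto
    also have "u * (c1 + k * q) + v * (c2 + k * q) = c + k * q"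
      using uv by (simp add: c_def algebra_simps) (metis distrib_left mult.right_neutral)
    finally show ?thesis by (simp add: q_def)
  qed
  define R where "R = norm T1 + norm T2 + 1 + (\<bar>G 0 - c\<bar> + 1) / k"
  have far: "G T > G 0" if "norm T > R" for T
  proof -
    have q0: "(\<bar>G 0 - c\<bar> + 1) / k \<ge> 0" using kp by simp
    then have qq: "norm T - norm T1 - norm T2 - 1 > (\<bar>G 0 - c\<bar> + 1) / k" using that by (simp add: R_def)
    then have "k * (norm T - norm T1 - norm T2 - 1) > k * ((\<bar>G 0 - c\<bar> + 1) / k)"
      using kp by (intro mult_strict_left_mono) auto
    also have "k * ((\<bar>G 0 - c\<bar> + 1) / k) = \<bar>G 0 - c\<bar> + 1" using kp by simp
    finally have "k * (norm T - norm T1 - norm T2 - 1) > \<bar>G 0 - c\<bar> + 1" .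
    moreover have "G T \<ge> c + k * (norm T - norm T1 - norm T2 - 1)"
      using qq q0 by (intro Glow) linarith
    ultimately show ?thesis by linarith
  qed
  have Gc: "continuous_on UNIV G"
    unfolding G_def by (intro continuous_intros continuous_on_compose2[OF F_cont _ subset_UNIV])
  have "R \<ge> 0" using kp by (simp add: R_def)
  then obtain Ts where Ts: "Ts \<in> cball 0 R" "\<And>y. y \<in> cball 0 R \<Longrightarrow> G Ts \<le> G y"
    using continuous_attains_inf[of "cball 0 R" G] Gc continuous_on_subset[OF Gc]
    by (metis compact_cball cball_eq_empty not_less subset_UNIV)
  have gmin: "G Ts \<le> G y" for y
  proof (cases "y \<in> cball 0 R")
    case True then show ?thesis using Ts by blast
  next
    case False
    then have "norm y > R" by (simp add: dist_norm)
    then have "G y > G 0" by (rule far)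
    moreover have "G Ts \<le> G 0" using Ts \<open>R \<ge> 0\<close> by simp
    ultimately show ?thesis by simp
  qed
  have dG: "(G has_derivative (\<lambda>H. D Ts \<bullet> H - B \<bullet> H)) (at Ts)"
  proof -
    have "(F has_derivative (\<lambda>H. D Ts \<bullet> H)) (at Ts)" by (rule pot_deriv)
    moreover have "((\<lambda>T. B \<bullet> T) has_derivative (\<lambda>H. B \<bullet> H)) (at Ts)"
      by (rule bounded_linear_imp_has_derivative) (rule bounded_linear_inner_right)
    ultimately show ?thesis unfolding G_def by (rule has_derivative_diff)
  qed
  have "(\<lambda>H. D Ts \<bullet> H - B \<bullet> H) = (\<lambda>H. 0)"
    by (rule has_derivative_local_min[OF dG]) (use gmin in auto)
  then have "D Ts \<bullet> (D Ts - B) - B \<bullet> (D Ts - B) = 0" by metis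
  then have "(D Ts - B) \<bullet> (D Ts - B) = 0" by (simp add: inner_diff_left)
  then have "D Ts = B" by simp
  then show "u *\<^sub>R X + v *\<^sub>R Y \<in> range D" unfolding B_def by (metis rangeI)
qed

end


context sym_setup begin

lemma conj_strict_convex: "strictly_convex_on_ereal (range D) (conjF F)"
  unfolding strictly_convex_on_ereal_def
proof (intro ballI impI allI)
  fix X Y :: "real^'a^'b" and u :: real
  assume X: "X \<in> range D" and Y: "Y \<in> range D" and XY: "X \<noteq> Y" and u: "0 < u \<and> u < 1"
  obtain T1 T2 where T: "X = D T1" "Y = D T2" using X Y by blast
  have "u *\<^sub>R X + (1 - u) *\<^sub>R Y \<in> range D"
    using range_convex X Y u unfolding convex_def by auto
  then obtain T where TZ: "u *\<^sub>R X + (1 - u) *\<^sub>R Y = D T" by blast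
  have T12: "T1 \<noteq> T2" using XY T by auto
  have l1: "X \<bullet> T - F T \<le> X \<bullet> T1 - F T1" using conj_strict[of T T1] T
    by (cases "T = T1") auto
  have l2: "Y \<bullet> T - F T \<le> Y \<bullet> T2 - F T2" using conj_strict[of T T2] T
    by (cases "T = T2") auto
  have s: "X \<bullet> T - F T < X \<bullet> T1 - F T1 \<or> Y \<bullet> T - F T < Y \<bullet> T2 - F T2"
    using conj_strict[of T T1] conj_strict[of T T2] T T12 by (cases "T = T1") auto
  have "D T \<bullet> T - F T = u * (X \<bullet> T - F T) + (1 - u) * (Y \<bullet> T - F T)"
    unfolding TZ[symmetric] by (simp add: inner_add_left algebra_simps)
  also have "\<dots> < u * (X \<bullet> T1 - F T1) + (1 - u) * (Y \<bullet> T2 - F T2)"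
  proof (cases "X \<bullet> T - F T < X \<bullet> T1 - F T1")
    case True
    have "u * (X \<bullet> T - F T) < u * (X \<bullet> T1 - F T1)" using True u by simp
    moreover have "(1 - u) * (Y \<bullet> T - F T) \<le> (1 - u) * (Y \<bullet> T2 - F T2)"
      using l2 u by (intro mult_left_mono) auto
    ultimately show ?thesis by linarith
  next
    case False
    then have st: "Y \<bullet> T - F T < Y \<bullet> T2 - F T2" using s by blast
    have "u * (X \<bullet> T - F T) \<le> u * (X \<bullet> T1 - F T1)" using l1 u by (intro mult_left_mono) auto
    moreover have "(1 - u) * (Y \<bullet> T - F T) < (1 - u) * (Y \<bullet> T2 - F T2)"
      using st u by simp
    ultimately show ?thesis by linarith
  qed
  finally have "D T \<bullet> T - F T < u * (X \<bullet> T1 - F T1) + (1 - u) * (Y \<bullet> T2 - F T2)" .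
  then show "conjF F (u *\<^sub>R X + (1 - u) *\<^sub>R Y) < ereal u * conjF F X + ereal (1 - u) * conjF F Y"
  proof -
    have "conjF F (u *\<^sub>R X + (1 - u) *\<^sub>R Y) = ereal (D T \<bullet> T - F T)" using TZ conj_val by simp
    moreover have "conjF F X = ereal (X \<bullet> T1 - F T1)" using conj_val T by simp
    moreover have "conjF F Y = ereal (Y \<bullet> T2 - F T2)" using conj_val T by simp
    ultimately show ?thesis using \<open>D T \<bullet> T - F T < _\<close> T by simp
  qed
qed

lemma conj_val_inv: "B \<in> range D \<Longrightarrow> conjF F B = ereal (B \<bullet> inv D B - F (inv D B))"
  by (metis conj_val f_inv_into_f)

lemma conj_deriv:
  assumes B: "B \<in> range D"
  shows "((\<lambda>X. real_of_ereal (conjF F X)) has_derivative (\<lambda>H. inv D B \<bullet> H)) (at B)"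
proof -
  define c where "c = (\<lambda>X. real_of_ereal (conjF F X))"
  define T0 where "T0 = inv D B"
  have cv: "c X = X \<bullet> inv D X - F (inv D X)" if "X \<in> range D" for X
    using conj_val_inv[OF that] by (simp add: c_def)
  have DT0: "D T0 = B" using B by (simp add: T0_def f_inv_into_f)
  have icont: "continuous_on (range D) (inv D)"
    by (rule continuous_on_inverse_open[OF open_UNIV contD]) (auto simp: inv_f_f D_inj)
  then have "isCont (inv D) B" using open_range B continuous_on_eq_continuous_at by blast
  then have lim: "((\<lambda>X. norm (inv D X - T0)) \<longlongrightarrow> 0) (at B)"
    unfolding T0_def isCont_def by (intro tendsto_norm_zero) (simp add: LIM_zero)
  have ev: "eventually (\<lambda>X. X \<in> range D) (at B)"
    using open_range B by (simp add: eventually_at_topological) blast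
  have bnd: "norm ((c X - c B - T0 \<bullet> (X - B)) / norm (X - B)) \<le> norm (inv D X - T0)"
    if X: "X \<in> range D" for X
  proof -
    define TX where "TX = inv D X"
    have DTX: "D TX = X" using X by (simp add: TX_def f_inv_into_f)
    have cX: "c X = X \<bullet> TX - F TX" using cv[OF X] by (simp add: TX_def)
    have cB: "c B = B \<bullet> T0 - F T0" using cv[OF B] by (simp add: T0_def)
    have lo: "X \<bullet> T0 - F T0 \<le> X \<bullet> TX - F TX"
      using conj_strict[of T0 TX] DTX by (cases "T0 = TX") auto
    have hi: "B \<bullet> TX - F TX \<le> B \<bullet> T0 - F T0"
      using conj_strict[of TX T0] DT0 by (cases "TX = T0") auto
    have "0 \<le> c X - c B - T0 \<bullet> (X - B)"
      using lo by (simp add: cX cB inner_diff_right inner_commute)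
    moreover have "c X - c B - T0 \<bullet> (X - B) \<le> (X - B) \<bullet> (TX - T0)"
      using hi by (simp add: cX cB inner_diff_right inner_diff_left inner_commute)
    moreover have "(X - B) \<bullet> (TX - T0) \<le> norm (X - B) * norm (TX - T0)"
      by (rule norm_cauchy_schwarz)
    ultimately have "\<bar>c X - c B - T0 \<bullet> (X - B)\<bar> \<le> norm (X - B) * norm (TX - T0)" by simp
    then show ?thesis
      by (cases "X = B") (auto simp: TX_def divide_le_eq mult.commute)
  qed
  have L0: "((\<lambda>X. (c X - c B - T0 \<bullet> (X - B)) / norm (X - B)) \<longlongrightarrow> 0) (at B)"
    by (rule Lim_null_comparison[OF _ lim]) (use ev bnd in \<open>auto elim: eventually_mono\<close>)
  then have "((\<lambda>X. norm (c X - c B - T0 \<bullet> (X - B)) / norm (X - B)) \<longlongrightarrow> 0) (at B)"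
  proof -
    have "((\<lambda>X. \<bar>(c X - c B - T0 \<bullet> (X - B)) / norm (X - B)\<bar>) \<longlongrightarrow> 0) (at B)"
      using tendsto_rabs_zero[OF L0] .
    moreover have "(\<lambda>X. \<bar>(c X - c B - T0 \<bullet> (X - B)) / norm (X - B)\<bar>) =
        (\<lambda>X. norm (c X - c B - T0 \<bullet> (X - B)) / norm (X - B))"
      by (auto simp: abs_divide)
    ultimately show ?thesis by simp
  qed
  then have "(c has_derivative (\<lambda>H. T0 \<bullet> H)) (at B)"
    unfolding has_derivative_iff_norm by (simp add: bounded_linear_inner_right)
  then show ?thesis by (simp add: c_def T0_def)
qed

end


lemma sum4_swap:
  "(\<Sum>i\<in>A. \<Sum>\<nu>\<in>B. \<Sum>j\<in>A. \<Sum>\<mu>\<in>B. g i \<nu> j \<mu>) = (\<Sum>j\<in>A. \<Sum>\<mu>\<in>B. \<Sum>i\<in>A. \<Sum>\<nu>\<in>B. g i \<nu> j \<mu>)"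
proof -
  have "(\<Sum>i\<in>A. \<Sum>\<nu>\<in>B. \<Sum>j\<in>A. \<Sum>\<mu>\<in>B. g i \<nu> j \<mu>) = (\<Sum>i\<in>A. \<Sum>j\<in>A. \<Sum>\<nu>\<in>B. \<Sum>\<mu>\<in>B. g i \<nu> j \<mu>)"
    by (rule sum.cong[OF refl]) (rule sum.swap)
  also have "\<dots> = (\<Sum>j\<in>A. \<Sum>i\<in>A. \<Sum>\<nu>\<in>B. \<Sum>\<mu>\<in>B. g i \<nu> j \<mu>)"
    by (rule sum.swap)
  also have "\<dots> = (\<Sum>j\<in>A. \<Sum>\<mu>\<in>B. \<Sum>i\<in>A. \<Sum>\<nu>\<in>B. g i \<nu> j \<mu>)"
  proof (rule sum.cong[OF refl])
    fix j
    have "(\<Sum>i\<in>A. \<Sum>\<nu>\<in>B. \<Sum>\<mu>\<in>B. g i \<nu> j \<mu>) = (\<Sum>i\<in>A. \<Sum>\<mu>\<in>B. \<Sum>\<nu>\<in>B. g i \<nu> j \<mu>)"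
      by (rule sum.cong[OF refl]) (rule sum.swap)
    also have "\<dots> = (\<Sum>\<mu>\<in>B. \<Sum>i\<in>A. \<Sum>\<nu>\<in>B. g i \<nu> j \<mu>)"
      by (rule sum.swap)
    finally show "(\<Sum>i\<in>A. \<Sum>\<nu>\<in>B. \<Sum>\<mu>\<in>B. g i \<nu> j \<mu>) = (\<Sum>\<mu>\<in>B. \<Sum>i\<in>A. \<Sum>\<nu>\<in>B. g i \<nu> j \<mu>)" .
  qed
  finally show ?thesis .
qed

theorem lemmaA1:
  fixes D :: "real^'N::finite^'d::finite \<Rightarrow> real^'N^'d"
    and h :: "real \<Rightarrow> real"
    and C0 C1 C2 :: real
  assumes C1D: "C1_map D"
    and C0: "C0 \<ge> 0" and C1: "C1 > 0" and C2: "C2 > 0"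
    and coerc: "\<And>T. D T \<bullet> T \<ge> C1 * norm T - C0"
    and hpos: "\<And>t. t \<ge> 0 \<Longrightarrow> h t > 0"
    and hmono: "\<And>s t. 0 \<le> s \<Longrightarrow> s \<le> t \<Longrightarrow> h t \<le> h s"
    and hcont: "continuous_on {0..} h"
    and ellip: "\<And>T B. h (norm T) * (norm B)\<^sup>2
                  \<le> (\<Sum>i\<in>UNIV. \<Sum>\<nu>\<in>UNIV. \<Sum>j\<in>UNIV. \<Sum>\<mu>\<in>UNIV. pdA D i \<nu> j \<mu> T * B $ i $ \<nu> * B $ j $ \<mu>)"
    and bound: "\<And>T B. (\<Sum>i\<in>UNIV. \<Sum>\<nu>\<in>UNIV. \<Sum>j\<in>UNIV. \<Sum>\<mu>\<in>UNIV. pdA D i \<nu> j \<mu> T * B $ i $ \<nu> * B $ j $ \<mu>)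
                  \<le> C2 * (norm B)\<^sup>2 / (1 + norm T)"
  shows "(\<forall>T1 T2. (D T1 - D T2) \<bullet> (T1 - T2) \<ge> h (norm T1 + norm T2) * (norm (T1 - T2))\<^sup>2)
       \<and> convex (closure (range D))
       \<and> ((\<forall>T i \<nu> j \<mu>. pdA D i \<nu> j \<mu> T = pdA D j \<mu> i \<nu> T) \<longrightarrow>
            (\<forall>T. (potF D has_derivative (\<lambda>H. D T \<bullet> H)) (at T))
          \<and> strictly_convex_on UNIV (potF D)
          \<and> strictly_convex_on_ereal (range D) (conjF (potF D))
          \<and> (\<forall>B. B \<notin> closure (range D) \<longrightarrow> conjF (potF D) B = \<infinity>)
          \<and> (\<forall>B\<in>range D. conjF (potF D) B = ereal (B \<bullet> inv D B - potF D (inv D B)))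
          \<and> (\<forall>B\<in>range D. ((\<lambda>X. real_of_ereal (conjF (potF D) X)) has_derivative (\<lambda>H. inv D B \<bullet> H)) (at B)))"
proof -
  obtain f' where fd: "\<And>x. (D has_derivative blinfun_apply (f' x)) (at x)"
    and fc: "continuous_on UNIV f'"
    using C1D unfolding C1_map_def by blast
  have pdA_eq: "pdA D i \<nu> j \<mu> T = f' T (ematrix j \<mu>) $ i $ \<nu>" for i \<nu> j \<mu> T
    using frechet_derivative_at[OF fd[of T]] by (simp add: pdA_def)
  have lin: "linear (blinfun_apply (f' T))" for T
    by (simp add: bounded_linear.linear blinfun.bounded_linear_right)
  have ell: "h (norm T) * (norm B)\<^sup>2 \<le> B \<bullet> f' T B" for T B
    using ellip[of T B] quad_eq[OF lin[of T], of B] by (simp only: pdA_eq)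
  interpret m: mono_setup D f' h
    by unfold_locales (use fd fc hpos hmono ell in auto)
  have P1: "\<forall>T1 T2. (D T1 - D T2) \<bullet> (T1 - T2) \<ge> h (norm T1 + norm T2) * (norm (T1 - T2))\<^sup>2"
    by (intro allI) (rule m.strong_mono)
  have P2: "convex (closure (range D))" by (rule m.convex_closure_range)
  have P3: "(\<forall>T. (potF D has_derivative (\<lambda>H. D T \<bullet> H)) (at T))
          \<and> strictly_convex_on UNIV (potF D)
          \<and> strictly_convex_on_ereal (range D) (conjF (potF D))
          \<and> (\<forall>B. B \<notin> closure (range D) \<longrightarrow> conjF (potF D) B = \<infinity>)
          \<and> (\<forall>B\<in>range D. conjF (potF D) B = ereal (B \<bullet> inv D B - potF D (inv D B)))
          \<and> (\<forall>B\<in>range D. ((\<lambda>X. real_of_ereal (conjF (potF D) X)) has_derivative (\<lambda>H. inv D B \<bullet> H)) (at B))"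
    if symA: "\<forall>T i \<nu> j \<mu>. pdA D i \<nu> j \<mu> T = pdA D j \<mu> i \<nu> T"
  proof -
    have sy: "f' T X \<bullet> Y = f' T Y \<bullet> X" for T X Y
    proof -
      define A where "A = (\<lambda>i \<nu> j \<mu>. f' T (ematrix j \<mu>) $ i $ \<nu>)"
      have As: "A i \<nu> j \<mu> = A j \<mu> i \<nu>" for i \<nu> j \<mu>
        using symA by (simp add: A_def pdA_eq)
      have e1: "f' T P \<bullet> Q = (\<Sum>i\<in>UNIV. \<Sum>\<nu>\<in>UNIV. \<Sum>j\<in>UNIV. \<Sum>\<mu>\<in>UNIV. A i \<nu> j \<mu> * P$j$\<mu> * Q$i$\<nu>)" for P Q
      proof -
        have "f' T P \<bullet> Q = (\<Sum>i\<in>UNIV. \<Sum>\<nu>\<in>UNIV. f' T P $ i $ \<nu> * Q $ i $ \<nu>)"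
          unfolding inner_vec_def inner_real_def by (rule refl)
        also have "\<dots> = (\<Sum>i\<in>UNIV. \<Sum>\<nu>\<in>UNIV. (\<Sum>j\<in>UNIV. \<Sum>\<mu>\<in>UNIV. P$j$\<mu> * f' T (ematrix j \<mu>) $ i $ \<nu>) * Q $ i $ \<nu>)"
          by (simp only: lin_expand[OF lin[of T], where X=P])
        also have "\<dots> = (\<Sum>i\<in>UNIV. \<Sum>\<nu>\<in>UNIV. \<Sum>j\<in>UNIV. \<Sum>\<mu>\<in>UNIV. A i \<nu> j \<mu> * P$j$\<mu> * Q$i$\<nu>)"
          unfolding A_def sum_distrib_right by (intro sum.cong refl) (simp only: mult_ac)
        finally show ?thesis .
      qed
      have "f' T X \<bullet> Y = (\<Sum>i\<in>UNIV. \<Sum>\<nu>\<in>UNIV. \<Sum>j\<in>UNIV. \<Sum>\<mu>\<in>UNIV. A i \<nu> j \<mu> * X$j$\<mu> * Y$i$\<nu>)"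
        by (rule e1)
      also have "\<dots> = (\<Sum>j\<in>UNIV. \<Sum>\<mu>\<in>UNIV. \<Sum>i\<in>UNIV. \<Sum>\<nu>\<in>UNIV. A i \<nu> j \<mu> * X$j$\<mu> * Y$i$\<nu>)"
        by (rule sum4_swap)
      also have "\<dots> = (\<Sum>j\<in>UNIV. \<Sum>\<mu>\<in>UNIV. \<Sum>i\<in>UNIV. \<Sum>\<nu>\<in>UNIV. A j \<mu> i \<nu> * Y$i$\<nu> * X$j$\<mu>)"
        by (intro sum.cong refl) (metis As mult.commute mult.assoc)
      also have "\<dots> = f' T Y \<bullet> X"
        by (rule e1[symmetric])
      finally show ?thesis .
    qed
    interpret s: sym_setup D f' h
      by unfold_locales (use sy in auto)
    show ?thesis
    proof (intro conjI allI ballI impI)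
      fix T show "(potF D has_derivative (\<lambda>H. D T \<bullet> H)) (at T)" by (rule s.pot_deriv)
    next
      show "strictly_convex_on UNIV (potF D)" by (rule s.F_strict_convex)
    next
      show "strictly_convex_on_ereal (range D) (conjF (potF D))" by (rule s.conj_strict_convex)
    next
      fix B :: "real^'N^'d" assume "B \<notin> closure (range D)"
      then show "conjF (potF D) B = \<infinity>" by (rule s.conj_infty)
    next
      fix B :: "real^'N^'d" assume "B \<in> range D"
      then show "conjF (potF D) B = ereal (B \<bullet> inv D B - potF D (inv D B))" by (rule s.conj_val_inv)
    next
      fix B :: "real^'N^'d" assume "B \<in> range D"
      then show "((\<lambda>X. real_of_ereal (conjF (potF D) X)) has_derivative (\<lambda>H. inv D B \<bullet> H)) (at B)"
        by (rule s.conj_deriv)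
    qed
  qed
  show ?thesis by (intro conjI impI P1 P2 P3)
qed


end
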